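(* Let $(W,\omega^W)$ be a vertex operator algebra. The map $\pi:\operatorname{ScAlg}(W,\omega^W)\to\operatorname{Sc}(W,\omega^W)$, $(V,\omega^V)\mapsto\omega^V$, restricts to a bijection from $\overline{\operatorname{S}(W,\omega^W)}$ onto $\operatorname{Sc}(W,\omega^W)$, whose inverse is $\omega'\mapsto (C_W(C_W(\langle\omega'\rangle)),\omega')$.
   Context: For a vertex operator algebra $(W,\omega^W)$ with $Y(v,z)=\sum_n v_nz^{-n-1}$ and $Y(\omega^W,z)=\sum_n L^W(n)z^{-n-2}$: a vertex operator subalgebra $(V,\omega^V)$ (a vertex subalgebra $V\ni\mathbf 1$ with a vector $\omega^V\in V$ making it a vertex operator algebra, possibly with a different conformal vector) is semi-conformal if $L^W(n)|_V=L^V(n)|_V$ for all $n\ge0$; $\omega^V$ is then called a semi-conformal vector. $\operatorname{ScAlg}(W,\omega^W)$ is the set of semi-conformal subalgebras, $\operatorname{Sc}(W,\omega^W)$ the set of semi-conformal vectors. For a vertex subalgebra $U$, the commutant is $C_W(U)=\{v\in W: u_nv=0\ \forall u\in U,\ n\ge 0\}$. $\langle\omega'\rangle$ denotes the vertex subalgebra generated by $\omega'$ and $\mathbf 1$. $\overline{\operatorname{S}(W,\omega^W)}=\{(V,\omega')\in\operatorname{ScAlg}(W,\omega^W): C_W(C_W(V))=V\}$ (the conformally closed semi-conformal subalgebras). *)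

theory Defs
  imports Complex_Main
begin

text \<open>
  A VOA is given on a carrier set V (a subspace), together with the vacuum vac,
  the modes Y u n v (= u_n v, where Y(u,z) = sum_n u_n z^(-n-1)) and a conformal
  vector om, so that L(n) = om_(n+1).  Axioms follow Frenkel-Lepowsky-Meurman /
  Lepowsky-Li; the Jacobi identity is given in component (Borcherds) form.
\<close>

definition L_op :: "('v \<Rightarrow> int \<Rightarrow> 'v \<Rightarrow> 'v) \<Rightarrow> 'v \<Rightarrow> int \<Rightarrow> 'v \<Rightarrow> 'v" where
  "L_op Y om n v = Y om (n + 1) v"

definition wt_space ::
  "(complex \<Rightarrow> 'v::ab_group_add \<Rightarrow> 'v) \<Rightarrow> 'v set \<Rightarrow> ('v \<Rightarrow> int \<Rightarrow> 'v \<Rightarrow> 'v) \<Rightarrow> 'v \<Rightarrow> int \<Rightarrow> 'v set" where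
  "wt_space sc V Y om n = {v \<in> V. L_op Y om 0 v = sc (of_int n) v}"

definition is_VOA ::
  "(complex \<Rightarrow> 'v::ab_group_add \<Rightarrow> 'v) \<Rightarrow> 'v set \<Rightarrow> 'v \<Rightarrow> ('v \<Rightarrow> int \<Rightarrow> 'v \<Rightarrow> 'v) \<Rightarrow> 'v \<Rightarrow> bool" where
  "is_VOA sc V vac Y om \<longleftrightarrow>
     vector_space sc \<and> module.subspace sc V \<and>
     \<comment> \<open>bilinearity and closure\<close>
     (\<forall>u\<in>V. \<forall>v\<in>V. \<forall>n. Y u n v \<in> V) \<and>
     (\<forall>a b. \<forall>u\<in>V. \<forall>u'\<in>V. \<forall>n. \<forall>v\<in>V. Y (sc a u + sc b u') n v = sc a (Y u n v) + sc b (Y u' n v)) \<and>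
     (\<forall>a b. \<forall>u\<in>V. \<forall>v\<in>V. \<forall>v'\<in>V. \<forall>n. Y u n (sc a v + sc b v') = sc a (Y u n v) + sc b (Y u n v')) \<and>
     \<comment> \<open>truncation\<close>
     (\<forall>u\<in>V. \<forall>v\<in>V. \<exists>N. \<forall>n\<ge>N. Y u n v = 0) \<and>
     \<comment> \<open>vacuum\<close>
     vac \<in> V \<and>
     (\<forall>v\<in>V. \<forall>n. Y vac n v = (if n = -1 then v else 0)) \<and>
     (\<forall>u\<in>V. Y u (-1) vac = u \<and> (\<forall>n\<ge>0. Y u n vac = 0)) \<and>
     \<comment> \<open>Jacobi identity (Borcherds identity), sums over i \<ge> 0 which are finite by truncation\<close>
     (\<forall>u\<in>V. \<forall>v\<in>V. \<forall>w\<in>V. \<forall>l m n::int. \<exists>N. \<forall>M\<ge>N.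
        (\<Sum>i\<le>M. sc ((of_int m :: complex) gchoose i) (Y (Y u (l + int i) v) (m + n - int i) w))
        = (\<Sum>i\<le>M. sc ((-1) ^ i * ((of_int l :: complex) gchoose i))
              (Y u (m + l - int i) (Y v (n + int i) w)
               - sc ((-1) powi l) (Y v (n + l - int i) (Y u (m + int i) w))))) \<and>
     \<comment> \<open>conformal vector: Virasoro relations with some central charge\<close>
     om \<in> V \<and>
     (\<exists>c::complex. \<forall>m n::int. \<forall>v\<in>V.
        L_op Y om m (L_op Y om n v) - L_op Y om n (L_op Y om m v)
        = sc (of_int (m - n)) (L_op Y om (m + n) v)
          + (if m + n = 0 then sc ((of_int m ^ 3 - of_int m) / 12 * c) v else 0)) \<and>
     \<comment> \<open>L(-1)-derivative property: Y(L(-1)u,z) = d/dz Y(u,z)\<close>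
     (\<forall>u\<in>V. \<forall>n. \<forall>v\<in>V. Y (L_op Y om (-1) u) n v = sc (- of_int n) (Y u (n - 1) v)) \<and>
     \<comment> \<open>Z-grading by L(0): V is the (direct) sum of the L(0)-eigenspaces V_n\<close>
     (\<forall>v\<in>V. \<exists>S f. finite S \<and> (\<forall>n\<in>S. f n \<in> wt_space sc V Y om n) \<and> v = sum f S) \<and>
     (\<forall>n. \<exists>B. finite B \<and> wt_space sc V Y om n \<subseteq> module.span sc B) \<and>
     (\<exists>N. \<forall>n<N. wt_space sc V Y om n = {0}) \<and>
     om \<in> wt_space sc V Y om 2"

definition vertex_subalgebra ::
  "(complex \<Rightarrow> 'v::ab_group_add \<Rightarrow> 'v) \<Rightarrow> 'v set \<Rightarrow> 'v \<Rightarrow> ('v \<Rightarrow> int \<Rightarrow> 'v \<Rightarrow> 'v) \<Rightarrow> 'v set \<Rightarrow> bool" where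
  "vertex_subalgebra sc W vac Y U \<longleftrightarrow>
     U \<subseteq> W \<and> module.subspace sc U \<and> vac \<in> U \<and> (\<forall>u\<in>U. \<forall>v\<in>U. \<forall>n. Y u n v \<in> U)"

definition commutant ::
  "'v::ab_group_add set \<Rightarrow> ('v \<Rightarrow> int \<Rightarrow> 'v \<Rightarrow> 'v) \<Rightarrow> 'v set \<Rightarrow> 'v set" where
  "commutant W Y U = {v \<in> W. \<forall>u\<in>U. \<forall>n\<ge>0. Y u n v = 0}"

definition generated_subalgebra ::
  "(complex \<Rightarrow> 'v::ab_group_add \<Rightarrow> 'v) \<Rightarrow> 'v set \<Rightarrow> 'v \<Rightarrow> ('v \<Rightarrow> int \<Rightarrow> 'v \<Rightarrow> 'v) \<Rightarrow> 'v \<Rightarrow> 'v set" where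
  "generated_subalgebra sc W vac Y x = \<Inter>{U. vertex_subalgebra sc W vac Y U \<and> x \<in> U}"

definition ScAlg ::
  "(complex \<Rightarrow> 'v::ab_group_add \<Rightarrow> 'v) \<Rightarrow> 'v set \<Rightarrow> 'v \<Rightarrow> ('v \<Rightarrow> int \<Rightarrow> 'v \<Rightarrow> 'v) \<Rightarrow> 'v \<Rightarrow> ('v set \<times> 'v) set" where
  "ScAlg sc W vac Y omW = {(V, omV).
      vertex_subalgebra sc W vac Y V \<and> omV \<in> V \<and> is_VOA sc V vac Y omV \<and>
      (\<forall>n\<ge>0. \<forall>v\<in>V. L_op Y omW n v = L_op Y omV n v)}"

definition Sc ::
  "(complex \<Rightarrow> 'v::ab_group_add \<Rightarrow> 'v) \<Rightarrow> 'v set \<Rightarrow> 'v \<Rightarrow> ('v \<Rightarrow> int \<Rightarrow> 'v \<Rightarrow> 'v) \<Rightarrow> 'v \<Rightarrow> 'v set" where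
  "Sc sc W vac Y omW = snd ` ScAlg sc W vac Y omW"

definition ScClosed ::
  "(complex \<Rightarrow> 'v::ab_group_add \<Rightarrow> 'v) \<Rightarrow> 'v set \<Rightarrow> 'v \<Rightarrow> ('v \<Rightarrow> int \<Rightarrow> 'v \<Rightarrow> 'v) \<Rightarrow> 'v \<Rightarrow> ('v set \<times> 'v) set" where
  "ScClosed sc W vac Y omW =
     {p \<in> ScAlg sc W vac Y omW. commutant W Y (commutant W Y (fst p)) = fst p}"

end

theory Submission
  imports Defs
begin

primrec Pl :: "('v \<Rightarrow> 'v) \<Rightarrow> (complex \<Rightarrow> 'v \<Rightarrow> 'v) \<Rightarrow> int list \<Rightarrow> 'v \<Rightarrow> 'v::ab_group_add" where
  "Pl T s [] x = x"
| "Pl T s (m # ms) x = T (Pl T s ms x) - s (of_int m) (Pl T s ms x)"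

locale voaW =
  fixes sc :: "complex \<Rightarrow> 'v::ab_group_add \<Rightarrow> 'v"
    and W :: "'v set" and vac :: 'v and Y :: "'v \<Rightarrow> int \<Rightarrow> 'v \<Rightarrow> 'v" and omW :: 'v
  assumes A: "is_VOA sc W vac Y omW"
begin

lemma vs: "vector_space sc" using A by (simp add: is_VOA_def)

sublocale vector_space sc by (rule vs)

lemma subW: "subspace W" using A by (simp add: is_VOA_def)
lemma clos: "u \<in> W \<Longrightarrow> v \<in> W \<Longrightarrow> Y u n v \<in> W" using A by (simp add: is_VOA_def)
lemma lin1: "u \<in> W \<Longrightarrow> u' \<in> W \<Longrightarrow> v \<in> W \<Longrightarrow> Y (sc a u + sc b u') n v = sc a (Y u n v) + sc b (Y u' n v)"
  using A by (simp add: is_VOA_def)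
lemma lin2: "u \<in> W \<Longrightarrow> v \<in> W \<Longrightarrow> v' \<in> W \<Longrightarrow> Y u n (sc a v + sc b v') = sc a (Y u n v) + sc b (Y u n v')"
  using A by (simp add: is_VOA_def)
lemma trunc: "u \<in> W \<Longrightarrow> v \<in> W \<Longrightarrow> \<exists>N. \<forall>n\<ge>N. Y u n v = 0" using A by (simp add: is_VOA_def)
lemma vac_in: "vac \<in> W" using A by (simp add: is_VOA_def)
lemma vac_left: "v \<in> W \<Longrightarrow> Y vac n v = (if n = -1 then v else 0)" using A by (simp add: is_VOA_def)
lemma vac_m1: "u \<in> W \<Longrightarrow> Y u (-1) vac = u" using A by (simp add: is_VOA_def)
lemma vac_pos: "u \<in> W \<Longrightarrow> n \<ge> 0 \<Longrightarrow> Y u n vac = 0" using A by (simp add: is_VOA_def)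
lemma jac: "u \<in> W \<Longrightarrow> v \<in> W \<Longrightarrow> w \<in> W \<Longrightarrow> \<exists>N. \<forall>M\<ge>N.
        (\<Sum>i\<le>M. sc ((of_int m :: complex) gchoose i) (Y (Y u (l + int i) v) (m + n - int i) w))
        = (\<Sum>i\<le>M. sc ((-1) ^ i * ((of_int l :: complex) gchoose i))
              (Y u (m + l - int i) (Y v (n + int i) w)
               - sc ((-1) powi l) (Y v (n + l - int i) (Y u (m + int i) w))))"
  using A unfolding is_VOA_def by blast
lemma omW_in: "omW \<in> W" using A by (simp add: is_VOA_def)
lemma deriv: "u \<in> W \<Longrightarrow> v \<in> W \<Longrightarrow> Y (Y omW 0 u) n v = sc (- of_int n) (Y u (n - 1) v)"
  using A unfolding is_VOA_def L_op_def by auto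

lemma W_fin: "\<forall>n. \<exists>B. finite B \<and> wt_space sc W Y omW n \<subseteq> span B" using A by (simp add: is_VOA_def)
lemma W_low: "\<exists>N. \<forall>n<N. wt_space sc W Y omW n = {0}" using A by (simp add: is_VOA_def)
lemma W0: "0 \<in> W" using subW subspace_0 by blast
lemma Wadd: "x \<in> W \<Longrightarrow> y \<in> W \<Longrightarrow> x + y \<in> W" using subW subspace_add by blast
lemma Wsc: "x \<in> W \<Longrightarrow> sc c x \<in> W" using subW subspace_scale by blast
lemma Wdiff: "x \<in> W \<Longrightarrow> y \<in> W \<Longrightarrow> x - y \<in> W" using subW subspace_diff by blast

lemma Y_zero_right: "u \<in> W \<Longrightarrow> Y u n 0 = 0"
  using lin2[of u 0 0 n 0 0] W0 by simp
lemma Y_zero_left: "v \<in> W \<Longrightarrow> Y 0 n v = 0"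
  using lin1[of 0 0 v 0 0 n] W0 by simp
lemma Y_scale_left: "u \<in> W \<Longrightarrow> v \<in> W \<Longrightarrow> Y (sc a u) n v = sc a (Y u n v)"
  using lin1[of u u v a 0 n] by simp
lemma Y_scale_right: "u \<in> W \<Longrightarrow> v \<in> W \<Longrightarrow> Y u n (sc a v) = sc a (Y u n v)"
  using lin2[of u v v n a 0] by simp
lemma Y_diff_left: "x \<in> W \<Longrightarrow> y \<in> W \<Longrightarrow> v \<in> W \<Longrightarrow> Y (x - y) n v = Y x n v - Y y n v"
  using lin1[of x y v 1 "-1" n] by simp
lemma Y_add_right: "u \<in> W \<Longrightarrow> v \<in> W \<Longrightarrow> v' \<in> W \<Longrightarrow> Y u n (v + v') = Y u n v + Y u n v'"
  using lin2[of u v v' n 1 1] by simp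
lemma Y_diff_right: "u \<in> W \<Longrightarrow> v \<in> W \<Longrightarrow> v' \<in> W \<Longrightarrow> Y u n (v - v') = Y u n v - Y u n v'"
  using lin2[of u v v' n 1 "-1"] by simp

lemma Y_sum_right: assumes u: "u \<in> W" shows "finite S \<Longrightarrow> (\<And>k. k \<in> S \<Longrightarrow> f k \<in> W) \<Longrightarrow> Y u n (sum f S) = (\<Sum>k\<in>S. Y u n (f k))"
proof (induction S rule: finite_induct)
  case empty then show ?case using u by (simp add: Y_zero_right)
next
  case (insert x F)
  have "sum f F \<in> W" by (rule subspace_sum[OF subW]) (simp add: insert.prems)
  then show ?case using insert u by (simp add: Y_add_right)
qed

lemma sum_single0: "(\<And>i. i \<noteq> 0 \<Longrightarrow> f i = 0) \<Longrightarrow> (\<Sum>i\<le>(M::nat). f i) = f 0"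
  by (subst sum.mono_neutral_right[of "{..M}" "{0}"]) auto

lemma comm_gen: "u \<in> W \<Longrightarrow> v \<in> W \<Longrightarrow> w \<in> W \<Longrightarrow> \<exists>N. \<forall>M\<ge>N.
   Y u m (Y v n w) - Y v n (Y u m w) = (\<Sum>i\<le>M. sc ((of_int m :: complex) gchoose i) (Y (Y u (int i) v) (m + n - int i) w))"
proof -
  assume h: "u \<in> W" "v \<in> W" "w \<in> W"
  from jac[OF h, of m 0 n] obtain N where N: "\<forall>M\<ge>N.
        (\<Sum>i\<le>M. sc ((of_int m :: complex) gchoose i) (Y (Y u (0 + int i) v) (m + n - int i) w))
        = (\<Sum>i\<le>M. sc ((-1) ^ i * ((of_int 0 :: complex) gchoose i))
              (Y u (m + 0 - int i) (Y v (n + int i) w)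
               - sc ((-1) powi 0) (Y v (n + 0 - int i) (Y u (m + int i) w))))" by blast
  show ?thesis
  proof (intro exI allI impI)
    fix M assume "M \<ge> N"
    with N have e: "(\<Sum>i\<le>M. sc ((of_int m :: complex) gchoose i) (Y (Y u (0 + int i) v) (m + n - int i) w))
        = (\<Sum>i\<le>M. sc ((-1) ^ i * ((of_int 0 :: complex) gchoose i))
              (Y u (m + 0 - int i) (Y v (n + int i) w)
               - sc ((-1) powi 0) (Y v (n + 0 - int i) (Y u (m + int i) w))))" by blast
    have "(\<Sum>i\<le>M. sc ((-1) ^ i * ((of_int 0 :: complex) gchoose i))
              (Y u (m + 0 - int i) (Y v (n + int i) w)
               - sc ((-1) powi 0) (Y v (n + 0 - int i) (Y u (m + int i) w))))
          = Y u m (Y v n w) - Y v n (Y u m w)"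
      by (subst sum_single0) (auto simp: gbinomial_0_left)
    with e show "Y u m (Y v n w) - Y v n (Y u m w) = (\<Sum>i\<le>M. sc ((of_int m :: complex) gchoose i) (Y (Y u (int i) v) (m + n - int i) w))"
      by simp
  qed
qed

lemma comm_zero: "u \<in> W \<Longrightarrow> v \<in> W \<Longrightarrow> w \<in> W \<Longrightarrow> (\<And>i. i \<ge> 0 \<Longrightarrow> Y u i v = 0) \<Longrightarrow>
   Y u m (Y v n w) = Y v n (Y u m w)"
proof -
  assume h: "u \<in> W" "v \<in> W" "w \<in> W" and z: "\<And>i. i \<ge> 0 \<Longrightarrow> Y u i v = 0"
  from comm_gen[OF h, of m n] obtain N where N: "\<forall>M\<ge>N.
   Y u m (Y v n w) - Y v n (Y u m w) = (\<Sum>i\<le>M. sc ((of_int m :: complex) gchoose i) (Y (Y u (int i) v) (m + n - int i) w))" by blast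
  hence "Y u m (Y v n w) - Y v n (Y u m w) = (\<Sum>i\<le>N. sc ((of_int m :: complex) gchoose i) (Y (Y u (int i) v) (m + n - int i) w))" by blast
  also have "\<dots> = 0" using z h by (simp add: Y_zero_left)
  finally show ?thesis by simp
qed

lemma comm0: "u \<in> W \<Longrightarrow> v \<in> W \<Longrightarrow> w \<in> W \<Longrightarrow>
   Y (Y u 0 v) n w = Y u 0 (Y v n w) - Y v n (Y u 0 w)"
proof -
  assume h: "u \<in> W" "v \<in> W" "w \<in> W"
  from comm_gen[OF h, of 0 n] obtain N where N: "\<forall>M\<ge>N.
   Y u 0 (Y v n w) - Y v n (Y u 0 w) = (\<Sum>i\<le>M. sc ((of_int 0 :: complex) gchoose i) (Y (Y u (int i) v) (0 + n - int i) w))" by blast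
  hence "Y u 0 (Y v n w) - Y v n (Y u 0 w) = (\<Sum>i\<le>N. sc ((of_int 0 :: complex) gchoose i) (Y (Y u (int i) v) (0 + n - int i) w))" by blast
  also have "\<dots> = Y (Y u 0 v) n w"
    by (subst sum_single0) (auto simp: gbinomial_0_left)
  finally show ?thesis by simp
qed

lemma Pl_W: "x \<in> W \<Longrightarrow> Pl (Y omW 1) sc ms x \<in> W"
  by (induction ms) (auto intro!: Wdiff Wsc clos omW_in)

lemma Pl_eig: assumes x: "x \<in> W" and e: "Y omW 1 x = sc (of_int k) x"
  shows "Pl (Y omW 1) sc ms x = sc (prod_list (map (\<lambda>m. of_int k - of_int m) ms)) x"
proof (induction ms)
  case Nil then show ?case by simp
next
  case (Cons m ms)
  let ?a = "prod_list (map (\<lambda>m. (of_int k :: complex) - of_int m) ms)"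
  have "Pl (Y omW 1) sc (m # ms) x = Y omW 1 (sc ?a x) - sc (of_int m) (sc ?a x)" using Cons by simp
  also have "\<dots> = sc (?a * of_int k) x - sc (of_int m * ?a) x" using Y_scale_right[OF omW_in x] e by simp
  also have "\<dots> = sc (?a * of_int k - of_int m * ?a) x" by (rule scale_left_diff_distrib[symmetric])
  also have "?a * of_int k - of_int m * ?a = (of_int k - of_int m) * ?a" by (simp add: algebra_simps)
  finally show ?case by simp
qed

lemma Pl_sum: assumes S: "finite S" and f: "\<And>k. k \<in> S \<Longrightarrow> f k \<in> W"
  shows "Pl (Y omW 1) sc ms (sum f S) = (\<Sum>k\<in>S. Pl (Y omW 1) sc ms (f k))"
proof (induction ms)
  case Nil then show ?case by simp
next
  case (Cons m ms)
  have fW: "\<And>k. k \<in> S \<Longrightarrow> Pl (Y omW 1) sc ms (f k) \<in> W" using f Pl_W by blast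
  have "Pl (Y omW 1) sc (m # ms) (sum f S) = Y omW 1 (\<Sum>k\<in>S. Pl (Y omW 1) sc ms (f k))
        - sc (of_int m) (\<Sum>k\<in>S. Pl (Y omW 1) sc ms (f k))" using Cons by simp
  also have "\<dots> = (\<Sum>k\<in>S. Y omW 1 (Pl (Y omW 1) sc ms (f k))) - (\<Sum>k\<in>S. sc (of_int m) (Pl (Y omW 1) sc ms (f k)))"
    using Y_sum_right[OF omW_in S fW] scale_sum_right by simp
  also have "\<dots> = (\<Sum>k\<in>S. Pl (Y omW 1) sc (m # ms) (f k))" by (simp add: sum_subtractf)
  finally show ?case .
qed

abbreviation "C X \<equiv> commutant W Y X"

lemma C_sub: "C X \<subseteq> W" by (auto simp: commutant_def)
lemma C_memI: "x \<in> W \<Longrightarrow> (\<And>u n. u \<in> X \<Longrightarrow> n \<ge> 0 \<Longrightarrow> Y u n x = 0) \<Longrightarrow> x \<in> C X"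
  by (auto simp: commutant_def)
lemma C_memD: "x \<in> C X \<Longrightarrow> u \<in> X \<Longrightarrow> n \<ge> 0 \<Longrightarrow> Y u n x = 0"
  by (auto simp: commutant_def)
lemma C_anti: "X \<subseteq> X' \<Longrightarrow> C X' \<subseteq> C X" by (auto simp: commutant_def)

lemma C_vsub: assumes X: "X \<subseteq> W" shows "vertex_subalgebra sc W vac Y (C X)"
proof -
  have sub: "subspace (C X)"
    unfolding subspace_def
  proof (intro conjI ballI allI)
    show "0 \<in> C X" using X W0 by (auto simp: commutant_def Y_zero_right)
    fix x y assume "x \<in> C X" "y \<in> C X"
    then show "x + y \<in> C X" using X by (auto simp: commutant_def Y_add_right Wadd)
  next
    fix c x assume "x \<in> C X"
    then show "sc c x \<in> C X" using X by (auto simp: commutant_def Y_scale_right Wsc)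
  qed
  have vac: "vac \<in> C X" using X vac_in vac_pos by (auto simp: commutant_def)
  have cl: "\<forall>u\<in>C X. \<forall>v\<in>C X. \<forall>n. Y u n v \<in> C X"
  proof (intro ballI allI)
    fix u v n assume u: "u \<in> C X" and v: "v \<in> C X"
    have uW: "u \<in> W" and vW: "v \<in> W" using u v by (auto simp: commutant_def)
    show "Y u n v \<in> C X" unfolding commutant_def
    proof (intro CollectI conjI ballI allI impI)
      show "Y u n v \<in> W" using clos uW vW by blast
      fix x and k :: int assume x: "x \<in> X" and k: "0 \<le> k"
      have xW: "x \<in> W" using x X by blast
      have "Y x k (Y u n v) = Y u n (Y x k v)"
        by (rule comm_zero[OF xW uW vW]) (use u x in \<open>auto simp: commutant_def\<close>)
      also have "\<dots> = 0" using v x k uW by (simp add: commutant_def Y_zero_right)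
      finally show "Y x k (Y u n v) = 0" .
    qed
  qed
  show ?thesis unfolding vertex_subalgebra_def using sub vac cl C_sub by blast
qed

lemma sym_comm: assumes xW: "x \<in> W" and vW: "v \<in> W" and z: "\<And>i. i \<ge> 0 \<Longrightarrow> Y x i v = 0"
  and n: "n \<ge> 0" shows "Y v n x = 0"
proof -
  have "Y x (-1) (Y v n vac) = Y v n (Y x (-1) vac)"
    by (rule comm_zero[OF xW vW vac_in]) (use z in auto)
  then show "Y v n x = 0" using vac_pos[OF vW n] vac_m1[OF xW] Y_zero_right[OF xW] by simp
qed

lemma C_incl: assumes X: "X \<subseteq> W" shows "X \<subseteq> C (C X)"
proof
  fix x assume x: "x \<in> X"
  have xW: "x \<in> W" using x X by blast
  show "x \<in> C (C X)"
  proof (rule C_memI)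
    show "x \<in> W" by (rule xW)
    fix v n assume v: "v \<in> C X" and n: "0 \<le> (n::int)"
    have vW: "v \<in> W" using v by (auto simp: commutant_def)
    have "Y x (-1) (Y v n vac) = Y v n (Y x (-1) vac)"
      by (rule comm_zero[OF xW vW vac_in]) (use v x in \<open>auto simp: commutant_def\<close>)
    then show "Y v n x = 0" using vac_pos[OF vW n] vac_m1[OF xW] Y_zero_right[OF xW] by simp
  qed
qed

lemma C3: assumes X: "X \<subseteq> W" shows "C (C (C X)) = C X"
proof
  show "C (C (C X)) \<subseteq> C X" by (rule C_anti[OF C_incl[OF X]])
  show "C X \<subseteq> C (C (C X))" by (rule C_incl[OF C_sub])
qed

lemma gen_in: "x \<in> generated_subalgebra sc W vac Y x"
  by (simp add: generated_subalgebra_def)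
lemma gen_min: "vertex_subalgebra sc W vac Y U \<Longrightarrow> x \<in> U \<Longrightarrow> generated_subalgebra sc W vac Y x \<subseteq> U"
  by (auto simp: generated_subalgebra_def)

context
  fixes V0 om
  assumes SA: "(V0, om) \<in> ScAlg sc W vac Y omW"
begin

lemma V0_vs: "vertex_subalgebra sc W vac Y V0" using SA by (simp add: ScAlg_def)
lemma V0W: "V0 \<subseteq> W" using V0_vs by (simp add: vertex_subalgebra_def)
lemma om_V0: "om \<in> V0" using SA by (simp add: ScAlg_def)
lemma V0_voa: "is_VOA sc V0 vac Y om" using SA by (simp add: ScAlg_def)
lemma V0_sc: "n \<ge> 0 \<Longrightarrow> v \<in> V0 \<Longrightarrow> Y omW (n+1) v = Y om (n+1) v"
  using SA by (simp add: ScAlg_def L_op_def)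
lemma omW': "om \<in> W" using om_V0 V0W by blast
lemma genW: "generated_subalgebra sc W vac Y om \<subseteq> V0" by (rule gen_min[OF V0_vs om_V0])

lemma V0_deriv: "u \<in> V0 \<Longrightarrow> v \<in> V0 \<Longrightarrow> Y (Y om 0 u) n v = sc (- of_int n) (Y u (n - 1) v)"
  using V0_voa unfolding is_VOA_def L_op_def by auto
lemma vac_V0: "vac \<in> V0" using V0_vs by (simp add: vertex_subalgebra_def)

lemma Lm1_eq: assumes u: "u \<in> V0" shows "Y om 0 u = Y omW 0 u"
proof -
  have uW: "u \<in> W" using u V0W by blast
  have a: "Y om 0 u \<in> W" using clos omW' uW by blast
  have b: "Y omW 0 u \<in> W" using clos omW_in uW by blast
  have "Y (Y om 0 u) (-1) vac = Y u (-2) vac" using V0_deriv[OF u vac_V0, of "-1"] by simp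
  moreover have "Y (Y omW 0 u) (-1) vac = Y u (-2) vac" using deriv[OF uW vac_in, of "-1"] by simp
  ultimately show ?thesis using vac_m1[OF a] vac_m1[OF b] by simp
qed

lemma down_ind:
  fixes P :: "int \<Rightarrow> bool"
  assumes N: "\<And>k. k \<ge> N \<Longrightarrow> P k" and st: "\<And>k. k \<ge> 0 \<Longrightarrow> P (k+1) \<Longrightarrow> P k"
  shows "k \<ge> 0 \<Longrightarrow> P k"
proof -
  have "\<forall>k. k \<ge> 0 \<longrightarrow> k + int d \<ge> N \<longrightarrow> P k" for d
  proof (induction d)
    case 0 then show ?case using N by simp
  next
    case (Suc d)
    show ?case
    proof (intro allI impI)
      fix k :: int assume "k \<ge> 0" "k + int (Suc d) \<ge> N"
      then have "P (k+1)" using Suc.IH by simp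
      then show "P k" using st \<open>k \<ge> 0\<close> by blast
    qed
  qed
  moreover assume "k \<ge> 0"
  ultimately show ?thesis by (metis add.commute le_add_same_cancel2 nat_0_le nat_int zle_iff_zadd
      int_nat_eq linorder_linear)
qed

lemma CV_eq: "C V0 = C (generated_subalgebra sc W vac Y om)"
proof
  show "C V0 \<subseteq> C (generated_subalgebra sc W vac Y om)" by (rule C_anti[OF genW])
  show "C (generated_subalgebra sc W vac Y om) \<subseteq> C V0"
  proof
    fix v assume v: "v \<in> C (generated_subalgebra sc W vac Y om)"
    have vW: "v \<in> W" using v by (simp add: commutant_def)
    have om0: "Y om 0 v = 0" using v gen_in by (simp add: commutant_def)
    show "v \<in> C V0" unfolding commutant_def
    proof (intro CollectI conjI ballI allI impI)
      show "v \<in> W" by (rule vW)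
      fix u k assume u: "u \<in> V0" and k: "0 \<le> (k::int)"
      have uW: "u \<in> W" using u V0W by blast
      obtain N where N: "\<forall>n\<ge>N. Y u n v = 0" using trunc[OF uW vW] by blast
      have step: "Y u j v = 0" if "j \<ge> 0" "Y u (j+1) v = 0" for j
      proof -
        have "Y (Y om 0 u) (j+1) v = Y om 0 (Y u (j+1) v) - Y u (j+1) (Y om 0 v)"
          by (rule comm0[OF omW' uW vW])
        also have "\<dots> = 0" using that om0 omW' uW by (simp add: Y_zero_right)
        finally have "Y (Y omW 0 u) (j+1) v = 0" using Lm1_eq[OF u] by simp
        then have "sc (- of_int (j+1)) (Y u j v) = 0" using deriv[OF uW vW, of "j+1"] by simp
        moreover have "of_int (- (j+1)) \<noteq> (0::complex)" using that(1) by (simp only: of_int_eq_0_iff)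
        hence "(- of_int (j+1) :: complex) \<noteq> 0" by (metis of_int_minus)
        ultimately show ?thesis by simp
      qed
      show "Y u k v = 0" by (rule down_ind[of N "\<lambda>j. Y u j v = 0"]) (use N step k in auto)
    qed
  qed
qed

lemma V0_vir: "\<exists>c::complex. \<forall>m n::int. \<forall>v\<in>V0.
        Y om (m+1) (Y om (n+1) v) - Y om (n+1) (Y om (m+1) v)
        = sc (of_int (m - n)) (Y om (m + n + 1) v)
          + (if m + n = 0 then sc ((of_int m ^ 3 - of_int m) / 12 * c) v else 0)"
  using V0_voa unfolding is_VOA_def L_op_def by (simp add: add.assoc)

lemma omi_om:
  assumes vir: "\<forall>m n::int. \<forall>v\<in>V0.
        Y om (m+1) (Y om (n+1) v) - Y om (n+1) (Y om (m+1) v)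
        = sc (of_int (m - n)) (Y om (m + n + 1) v)
          + (if m + n = 0 then sc ((of_int m ^ 3 - of_int m) / 12 * c) v else 0)"
    and i: "i \<ge> 1"
  shows "Y om i om = (if i = 1 then sc 2 om else if i = 3 then sc (c/2) vac else 0)"
proof -
  define m where "m = i - 1"
  have m0: "m \<ge> 0" using i m_def by simp
  have im: "i = m + 1" using m_def by simp
  have e: "Y om (m+1) (Y om (-2+1) vac) - Y om (-2+1) (Y om (m+1) vac)
        = sc (of_int (m - -2)) (Y om (m + -2 + 1) vac)
          + (if m + -2 = 0 then sc ((of_int m ^ 3 - of_int m) / 12 * c) vac else 0)"
    using vir vac_V0 by blast
  have a: "Y om (-1) vac = om" using vac_m1[OF omW'] .
  have b: "Y om (m+1) vac = 0" using vac_pos[OF omW'] m0 by simp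
  have e2: "Y om i om = sc (of_int (m + 2)) (Y om (m - 1) vac)
          + (if m = 2 then sc ((of_int m ^ 3 - of_int m) / 12 * c) vac else 0)"
    using e a b Y_zero_right[OF omW'] im by (simp add: algebra_simps)
  consider "m = 0" | "m = 1" | "m = 2" | "m \<ge> 3" using m0 by linarith
  then show ?thesis
  proof cases
    case 1 then show ?thesis using e2 a im by simp
  next
    case 2 then show ?thesis using e2 im vac_pos[OF omW', of 0] by simp
  next
    case 3
    then have "Y om i om = sc ((8 - 2) / 12 * c) vac" using e2 im vac_pos[OF omW', of 1] by simp
    then show ?thesis using 3 im by simp
  next
    case 4 then show ?thesis using e2 im vac_pos[OF omW', of "m - 1"] by simp
  qed
qed

lemma om0_om: "Y om 0 om = Y omW 0 om" using Lm1_eq[OF om_V0] .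

abbreviation "G \<equiv> generated_subalgebra sc W vac Y om"
abbreviation "V \<equiv> C (C G)"

lemma GW: "G \<subseteq> W" using genW V0W by blast
lemma CG_W: "C G \<subseteq> W" by (rule C_sub)
lemma V_vs: "vertex_subalgebra sc W vac Y V" by (rule C_vsub[OF CG_W])
lemma VW: "V \<subseteq> W" by (rule C_sub)
lemma om_V: "om \<in> V" using C_incl[OF GW] gen_in by blast
lemma V_eq: "V = C (C V0)" using CV_eq by simp
lemma V_sub: "subspace V" using V_vs by (simp add: vertex_subalgebra_def)
lemma V_clos: "u \<in> V \<Longrightarrow> v \<in> V \<Longrightarrow> Y u n v \<in> V" using V_vs by (simp add: vertex_subalgebra_def)
lemma vac_V: "vac \<in> V" using V_vs by (simp add: vertex_subalgebra_def)

lemma om2_C: "omW - om \<in> C V0"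
proof (rule C_memI)
  show "omW - om \<in> W" using Wdiff omW_in omW' by blast
  fix u and k :: int assume u: "u \<in> V0" and k: "k \<ge> 0"
  have uW: "u \<in> W" using u V0W by blast
  have "Y (omW - om) n u = 0" if n: "n \<ge> 0" for n
  proof -
  have "Y (omW - om) n u = Y omW n u - Y om n u" using Y_diff_left omW_in omW' uW by blast
  also have "\<dots> = 0"
  proof (cases "n = 0")
    case True then show ?thesis using Lm1_eq[OF u] by simp
  next
    case False
    then have "n = (n - 1) + 1" "n - 1 \<ge> 0" using n by auto
    then show ?thesis using V0_sc[of "n-1" u] u by simp
  qed
  finally show "Y (omW - om) n u = 0" .
  qed
  then show "Y u k (omW - om) = 0" using sym_comm[OF Wdiff[OF omW_in omW'] uW _ k] by blast
qed

lemma V_semi: "v \<in> V \<Longrightarrow> n \<ge> 0 \<Longrightarrow> Y omW n v = Y om n v"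
proof -
  assume v: "v \<in> V" and n: "n \<ge> 0"
  have vW: "v \<in> W" using v VW by blast
  have "Y (omW - om) n v = 0" using C_memD[OF _ om2_C n] v V_eq by blast
  then show ?thesis using Y_diff_left[OF omW_in omW' vW] by simp
qed

lemma V_vir:
  assumes vir: "\<forall>m n::int. \<forall>v\<in>V0.
        Y om (m+1) (Y om (n+1) v) - Y om (n+1) (Y om (m+1) v)
        = sc (of_int (m - n)) (Y om (m + n + 1) v)
          + (if m + n = 0 then sc ((of_int m ^ 3 - of_int m) / 12 * c) v else 0)"
    and w: "w \<in> W"
  shows "Y om (m+1) (Y om (n+1) w) - Y om (n+1) (Y om (m+1) w)
        = sc (of_int (m - n)) (Y om (m + n + 1) w)
          + (if m + n = 0 then sc ((of_int m ^ 3 - of_int m) / 12 * c) w else 0)"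
proof -
  define T where "T i = sc ((of_int (m+1) :: complex) gchoose i) (Y (Y om (int i) om) ((m+1) + (n+1) - int i) w)" for i
  obtain N where N: "\<forall>M\<ge>N. Y om (m+1) (Y om (n+1) w) - Y om (n+1) (Y om (m+1) w) = (\<Sum>i\<le>M. T i)"
    using comm_gen[OF omW' omW' w, of "m+1" "n+1"] unfolding T_def by blast
  have z: "T i = 0" if "i \<notin> {0,1,3}" for i
  proof -
    have "Y om (int i) om = 0" using omi_om[OF vir, of "int i"] that by auto
    then show ?thesis unfolding T_def using Y_zero_left[OF w] by simp
  qed
  have "Y om (m+1) (Y om (n+1) w) - Y om (n+1) (Y om (m+1) w) = (\<Sum>i\<le>max N 3. T i)" using N by simp
  also have "\<dots> = (\<Sum>i\<in>{0,1,3}. T i)"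
    by (rule sum.mono_neutral_right) (use z in auto)
  also have "\<dots> = T 0 + T 1 + T 3" by simp
  finally have e: "Y om (m+1) (Y om (n+1) w) - Y om (n+1) (Y om (m+1) w) = T 0 + T 1 + T 3" .
  have T0: "T 0 = sc (- of_int (m+n+2)) (Y om (m+n+1) w)"
    unfolding T_def using om0_om deriv[OF omW' w, of "m+1+(n+1)"] by (simp add: algebra_simps)
  have T1: "T 1 = sc (of_int (m+1) * 2) (Y om (m+n+1) w)"
    unfolding T_def using omi_om[OF vir, of 1] Y_scale_left[OF omW' w] by (simp add: algebra_simps)
  have g3: "(a::complex) gchoose 3 = a * (a - 1) * (a - 2) / 6" for a
    by (simp add: gbinomial_Suc numeral_3_eq_3 atLeastAtMostSuc_conv fact_numeral algebra_simps)
  have T3: "T 3 = (if m + n = 0 then sc ((of_int m ^ 3 - of_int m) / 12 * c) w else 0)"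
  proof -
    have "T 3 = sc ((of_int (m+1) :: complex) gchoose 3) (Y (sc (c/2) vac) ((m+1) + (n+1) - 3) w)"
      unfolding T_def using omi_om[OF vir, of 3] by simp
    also have "\<dots> = sc (((of_int (m+1) :: complex) gchoose 3) * (c/2)) (if m + n = 0 then w else 0)"
      using Y_scale_left[OF vac_in w] vac_left[OF w] by simp
    also have "\<dots> = (if m + n = 0 then sc ((of_int m ^ 3 - of_int m) / 12 * c) w else 0)"
    proof -
      have "((of_int (m+1) :: complex) gchoose 3) * (c/2) = (of_int m ^ 3 - of_int m) / 12 * c"
        unfolding g3 by (simp add: field_simps power3_eq_cube)
      then show ?thesis by simp
    qed
    finally show ?thesis .
  qed
  have "T 0 + T 1 = sc (of_int (m - n)) (Y om (m + n + 1) w)"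
  proof -
    have "T 0 + T 1 = sc (- of_int (m+n+2) + of_int (m+1) * 2) (Y om (m+n+1) w)"
      unfolding T0 T1 by (rule scale_left_distrib[symmetric])
    also have "(- of_int (m+n+2) + of_int (m+1) * 2 :: complex) = of_int (m - n)" by simp
    finally show ?thesis by (simp add: add.assoc)
  qed
  then show ?thesis using e T3 by simp
qed

lemma Pl_V: "x \<in> V \<Longrightarrow> Pl (Y omW 1) sc ms x \<in> V"
proof (induction ms)
  case Nil then show ?case by simp
next
  case (Cons m ms)
  have "Y omW 1 (Pl (Y omW 1) sc ms x) = Y om 1 (Pl (Y omW 1) sc ms x)" using V_semi Cons by simp
  moreover have "Y om 1 (Pl (Y omW 1) sc ms x) \<in> V" using V_clos om_V Cons by blast
  ultimately show ?case using Cons V_sub subspace_diff subspace_scale by simp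
qed

lemma W_grade: "\<forall>v\<in>W. \<exists>S f. finite S \<and> (\<forall>n\<in>S. f n \<in> wt_space sc W Y omW n) \<and> v = sum f S"
  using A by (simp add: is_VOA_def)

lemma V_grade: assumes v: "v \<in> V" shows "\<exists>S f. finite S \<and> (\<forall>n\<in>S. f n \<in> wt_space sc V Y om n) \<and> v = sum f S"
proof -
  have vW: "v \<in> W" using v VW by blast
  obtain S f where S: "finite S" and f: "\<forall>n\<in>S. f n \<in> wt_space sc W Y omW n" and vs: "v = sum f S"
    using W_grade vW by blast
  have fW: "\<And>k. k \<in> S \<Longrightarrow> f k \<in> W" using f by (simp add: wt_space_def)
  have fe: "\<And>k. k \<in> S \<Longrightarrow> Y omW 1 (f k) = sc (of_int k) (f k)" using f by (simp add: wt_space_def L_op_def)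
  have fV: "f n \<in> V" if n: "n \<in> S" for n
  proof -
    define ms where "ms = sorted_list_of_set (S - {n})"
    have sms: "set ms = S - {n}" using S by (simp add: ms_def)
    define a where "a k = prod_list (map (\<lambda>m. (of_int k :: complex) - of_int m) ms)" for k
    have "Pl (Y omW 1) sc ms v = (\<Sum>k\<in>S. Pl (Y omW 1) sc ms (f k))"
      unfolding vs by (rule Pl_sum[OF S fW])
    also have "\<dots> = (\<Sum>k\<in>S. sc (a k) (f k))"
    proof (rule sum.cong[OF refl])
      fix k assume k: "k \<in> S"
      show "Pl (Y omW 1) sc ms (f k) = sc (a k) (f k)" unfolding a_def by (rule Pl_eig[OF fW[OF k] fe[OF k]])
    qed
    also have "\<dots> = sc (a n) (f n) + (\<Sum>k\<in>S - {n}. sc (a k) (f k))"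
      by (rule sum.remove[OF S n])
    also have "(\<Sum>k\<in>S - {n}. sc (a k) (f k)) = 0"
    proof (rule sum.neutral, rule ballI)
      fix k assume k: "k \<in> S - {n}"
      have "k \<in> set ms" using k sms by simp
      then have "a k = 0" unfolding a_def by (induction ms) auto
      then show "sc (a k) (f k) = 0" by simp
    qed
    finally have P: "Pl (Y omW 1) sc ms v = sc (a n) (f n)" by simp
    have "n \<notin> set ms" using sms by simp
    then have an: "a n \<noteq> 0" unfolding a_def by (induction ms) auto
    have "f n = sc (1 / a n) (Pl (Y omW 1) sc ms v)" using P an by simp
    then show ?thesis using Pl_V[OF v] V_sub subspace_scale by metis
  qed
  show ?thesis
  proof (intro exI conjI)
    show "finite S" by (rule S)
    show "v = sum f S" by (rule vs)
    show "\<forall>n\<in>S. f n \<in> wt_space sc V Y om n"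
      using fV fe V_semi by (simp add: wt_space_def L_op_def)
  qed
qed

lemma wt_sub: "wt_space sc V Y om n \<subseteq> wt_space sc W Y omW n"
  using VW V_semi by (auto simp: wt_space_def L_op_def)

lemma V_voa: "is_VOA sc V vac Y om"
proof -
  obtain c where vir: "\<forall>m n::int. \<forall>v\<in>V0.
        Y om (m+1) (Y om (n+1) v) - Y om (n+1) (Y om (m+1) v)
        = sc (of_int (m - n)) (Y om (m + n + 1) v)
          + (if m + n = 0 then sc ((of_int m ^ 3 - of_int m) / 12 * c) v else 0)"
    using V0_vir by blast
  have h1: "vector_space sc" by (rule vs)
  have h2: "subspace V" by (rule V_sub)
  have h3: "\<forall>u\<in>V. \<forall>v\<in>V. \<forall>n. Y u n v \<in> V" using V_clos by blast
  have h4: "\<forall>a b. \<forall>u\<in>V. \<forall>u'\<in>V. \<forall>n. \<forall>v\<in>V. Y (sc a u + sc b u') n v = sc a (Y u n v) + sc b (Y u' n v)"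
    using lin1 VW by blast
  have h5: "\<forall>a b. \<forall>u\<in>V. \<forall>v\<in>V. \<forall>v'\<in>V. \<forall>n. Y u n (sc a v + sc b v') = sc a (Y u n v) + sc b (Y u n v')"
    using lin2 VW by blast
  have h6: "\<forall>u\<in>V. \<forall>v\<in>V. \<exists>N. \<forall>n\<ge>N. Y u n v = 0" using trunc VW by blast
  have h7: "vac \<in> V" by (rule vac_V)
  have h8: "\<forall>v\<in>V. \<forall>n. Y vac n v = (if n = -1 then v else 0)" using vac_left VW by blast
  have h9: "\<forall>u\<in>V. Y u (-1) vac = u \<and> (\<forall>n\<ge>0. Y u n vac = 0)" using vac_m1 vac_pos VW by blast
  have h10: "\<forall>u\<in>V. \<forall>v\<in>V. \<forall>w\<in>V. \<forall>l m n::int. \<exists>N. \<forall>M\<ge>N.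
        (\<Sum>i\<le>M. sc ((of_int m :: complex) gchoose i) (Y (Y u (l + int i) v) (m + n - int i) w))
        = (\<Sum>i\<le>M. sc ((-1) ^ i * ((of_int l :: complex) gchoose i))
              (Y u (m + l - int i) (Y v (n + int i) w)
               - sc ((-1) powi l) (Y v (n + l - int i) (Y u (m + int i) w))))"
  proof (intro ballI allI)
    fix u v w l m n assume "u \<in> V" "v \<in> V" "w \<in> V"
    then show "\<exists>N. \<forall>M\<ge>N.
        (\<Sum>i\<le>M. sc ((of_int m :: complex) gchoose i) (Y (Y u (l + int i) v) (m + n - int i) w))
        = (\<Sum>i\<le>M. sc ((-1) ^ i * ((of_int l :: complex) gchoose i))
              (Y u (m + l - int i) (Y v (n + int i) w)
               - sc ((-1) powi l) (Y v (n + l - int i) (Y u (m + int i) w))))"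
      using jac VW by blast
  qed
  have h11: "om \<in> V" by (rule om_V)
  have h12: "\<exists>c::complex. \<forall>m n::int. \<forall>v\<in>V.
        L_op Y om m (L_op Y om n v) - L_op Y om n (L_op Y om m v)
        = sc (of_int (m - n)) (L_op Y om (m + n) v)
          + (if m + n = 0 then sc ((of_int m ^ 3 - of_int m) / 12 * c) v else 0)"
  proof (intro exI allI ballI)
    fix m n :: int and v assume v: "v \<in> V"
    show "L_op Y om m (L_op Y om n v) - L_op Y om n (L_op Y om m v)
        = sc (of_int (m - n)) (L_op Y om (m + n) v)
          + (if m + n = 0 then sc ((of_int m ^ 3 - of_int m) / 12 * c) v else 0)"
      unfolding L_op_def using V_vir[OF vir, of v m n] v VW by (auto simp: add.assoc)
  qed
  have h13: "\<forall>u\<in>V. \<forall>n. \<forall>v\<in>V. Y (L_op Y om (-1) u) n v = sc (- of_int n) (Y u (n - 1) v)"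
  proof (intro ballI allI)
    fix u n v assume u: "u \<in> V" and v: "v \<in> V"
    have "L_op Y om (-1) u = Y omW 0 u" unfolding L_op_def using V_semi[OF u, of 0] by simp
    then show "Y (L_op Y om (-1) u) n v = sc (- of_int n) (Y u (n - 1) v)" using deriv u v VW by auto
  qed
  have h14: "\<forall>v\<in>V. \<exists>S f. finite S \<and> (\<forall>n\<in>S. f n \<in> wt_space sc V Y om n) \<and> v = sum f S"
    using V_grade by blast
  have h15: "\<forall>n. \<exists>B. finite B \<and> wt_space sc V Y om n \<subseteq> span B"
  proof
    fix n
    obtain B where "finite B" "wt_space sc W Y omW n \<subseteq> span B" using W_fin by blast
    then show "\<exists>B. finite B \<and> wt_space sc V Y om n \<subseteq> span B" using wt_sub by blast
  qed
  have h16: "\<exists>N. \<forall>n<N. wt_space sc V Y om n = {0}"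
  proof -
    obtain N where N: "\<forall>n<N. wt_space sc W Y omW n = {0}" using W_low by blast
    have "0 \<in> wt_space sc V Y om n" for n
      using V_sub subspace_0 VW by (auto simp: wt_space_def L_op_def Y_zero_right omW')
    then show ?thesis using N wt_sub by blast
  qed
  have h17: "om \<in> wt_space sc V Y om 2"
  proof -
    have "om \<in> wt_space sc V0 Y om 2" using V0_voa by (simp add: is_VOA_def)
    then show ?thesis using om_V by (simp add: wt_space_def)
  qed
  show ?thesis unfolding is_VOA_def
    apply (intro conjI)
    apply (fact h1)
    apply (fact h2)
    apply (fact h3)
    apply (fact h4)
    apply (fact h5)
    apply (fact h6)
    apply (fact h7)
    apply (fact h8)
    apply (fact h9)
    apply (fact h10)
    apply (fact h11)
    apply (fact h12)
    apply (fact h13)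
    apply (fact h14)
    apply (fact h15)
    apply (fact h16)
    apply (fact h17)
    done
qed

lemma V_ScClosed: "(V, om) \<in> ScClosed sc W vac Y omW"
proof -
  have "(V, om) \<in> ScAlg sc W vac Y omW"
    unfolding ScAlg_def using V_vs om_V V_voa V_semi by (simp add: L_op_def)
  moreover have "C (C V) = V" using C3[OF CG_W] by simp
  ultimately show ?thesis unfolding ScClosed_def by simp
qed

end

lemma closed_unique: "(V1, om) \<in> ScClosed sc W vac Y omW \<Longrightarrow> V1 = C (C (generated_subalgebra sc W vac Y om))"
proof -
  assume h: "(V1, om) \<in> ScClosed sc W vac Y omW"
  then have sa: "(V1, om) \<in> ScAlg sc W vac Y omW" and cl: "C (C V1) = V1" by (auto simp: ScClosed_def)
  have "C V1 = C (generated_subalgebra sc W vac Y om)" by (rule CV_eq[OF sa])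
  then show ?thesis using cl by simp
qed

end

theorem proposition2p1:
  fixes sc :: "complex \<Rightarrow> 'v::ab_group_add \<Rightarrow> 'v"
    and W :: "'v set" and vac :: 'v and Y :: "'v \<Rightarrow> int \<Rightarrow> 'v \<Rightarrow> 'v" and omW :: 'v
  assumes "is_VOA sc W vac Y omW"
  shows "bij_betw snd (ScClosed sc W vac Y omW) (Sc sc W vac Y omW) \<and>
         (\<forall>om' \<in> Sc sc W vac Y omW.
            (commutant W Y (commutant W Y (generated_subalgebra sc W vac Y om')), om')
              \<in> ScClosed sc W vac Y omW \<and>
            the_inv_into (ScClosed sc W vac Y omW) snd om'
              = (commutant W Y (commutant W Y (generated_subalgebra sc W vac Y om')), om'))"
proof -
  interpret voaW sc W vac Y omW by (rule voaW.intro) (rule assms)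
  have mem: "(commutant W Y (commutant W Y (generated_subalgebra sc W vac Y om')), om')
              \<in> ScClosed sc W vac Y omW" if o: "om' \<in> Sc sc W vac Y omW" for om'
  proof -
    obtain p where p: "p \<in> ScAlg sc W vac Y omW" "om' = snd p" using o unfolding Sc_def by blast
    then have "(fst p, om') \<in> ScAlg sc W vac Y omW" by simp
    then show ?thesis by (rule V_ScClosed)
  qed
  have inj: "inj_on snd (ScClosed sc W vac Y omW)"
  proof (rule inj_onI)
    fix p q assume p: "p \<in> ScClosed sc W vac Y omW" and q: "q \<in> ScClosed sc W vac Y omW" and e: "snd p = snd q"
    obtain V1 o1 where p': "p = (V1, o1)" by (cases p)
    obtain V2 o2 where q': "q = (V2, o2)" by (cases q)
    have "o1 = o2" using e p' q' by simp
    then show "p = q" using closed_unique p q p' q' by auto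
  qed
  have img: "snd ` ScClosed sc W vac Y omW = Sc sc W vac Y omW"
  proof
    show "snd ` ScClosed sc W vac Y omW \<subseteq> Sc sc W vac Y omW"
      by (auto simp: ScClosed_def Sc_def)
    show "Sc sc W vac Y omW \<subseteq> snd ` ScClosed sc W vac Y omW"
    proof
      fix om' assume "om' \<in> Sc sc W vac Y omW"
      then have "(commutant W Y (commutant W Y (generated_subalgebra sc W vac Y om')), om')
              \<in> ScClosed sc W vac Y omW" by (rule mem)
      then show "om' \<in> snd ` ScClosed sc W vac Y omW" by force
    qed
  qed
  have bij: "bij_betw snd (ScClosed sc W vac Y omW) (Sc sc W vac Y omW)"
    using inj img by (simp add: bij_betw_def)
  show ?thesis
  proof (intro conjI ballI)
    show "bij_betw snd (ScClosed sc W vac Y omW) (Sc sc W vac Y omW)" by (rule bij)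
    fix om' assume o: "om' \<in> Sc sc W vac Y omW"
    show "(commutant W Y (commutant W Y (generated_subalgebra sc W vac Y om')), om')
              \<in> ScClosed sc W vac Y omW" using mem[OF o] .
    show "the_inv_into (ScClosed sc W vac Y omW) snd om'
              = (commutant W Y (commutant W Y (generated_subalgebra sc W vac Y om')), om')"
      by (rule the_inv_into_f_eq[OF inj _ mem[OF o]]) simp
  qed
qed

end
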